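(* Let $p\in\mathscr P(\mathbb C)$. Then $\mathcal F^{p(\cdot)}$ is a closed subspace of $\mathcal L^{p(\cdot)}$, and hence a Banach space.
   Context: $A$ denotes Lebesgue area measure on $\mathbb C$. A variable exponent is a measurable function $p:\mathbb C\to[1,\infty)$; $p^+=\operatorname{ess\,sup}_{\mathbb C}p$, and $\mathscr P(\mathbb C)$ is the set of variable exponents with $p^+<\infty$. $\mathcal L^{p(\cdot)}$ is the space of measurable $f:\mathbb C\to\mathbb C$ such that $\int_{\mathbb C}(\lambda|f(z)|)^{p(z)}e^{-p(z)|z|^2}\,dA(z)<\infty$ for some $\lambda>0$, normed by $\|f\|_{\mathcal L^{p(\cdot)}}=\inf\{\lambda>0:\int_{\mathbb C}(|f(z)|/\lambda)^{p(z)}e^{-p(z)|z|^2}\,dA(z)\le1\}$ (a Banach space). The variable exponent Fock space $\mathcal F^{p(\cdot)}$ is the set of entire functions belonging to $\mathcal L^{p(\cdot)}$, with the same norm. *)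

theory Defs
  imports "HOL-Analysis.Analysis"
begin

definition var_exponent :: "(complex \<Rightarrow> real) \<Rightarrow> bool" where
  "var_exponent p \<longleftrightarrow> p \<in> borel_measurable lebesgue \<and> (\<forall>z. 1 \<le> p z)"

definition bounded_var_exponent :: "(complex \<Rightarrow> real) \<Rightarrow> bool" where
  "bounded_var_exponent p \<longleftrightarrow> var_exponent p \<and> (\<exists>M. AE z in lebesgue. p z \<le> M)"

definition fock_modular :: "(complex \<Rightarrow> real) \<Rightarrow> (complex \<Rightarrow> complex) \<Rightarrow> ennreal" where
  "fock_modular p f =
     (\<integral>\<^sup>+ z. ennreal ((cmod (f z)) powr (p z) * exp (- p z * (cmod z)\<^sup>2)) \<partial>lebesgue)"

definition Lvar :: "(complex \<Rightarrow> real) \<Rightarrow> (complex \<Rightarrow> complex) set" where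
  "Lvar p = {f. f \<in> borel_measurable lebesgue \<and>
                 (\<exists>lam>0. fock_modular p (\<lambda>z. complex_of_real lam * f z) < \<infinity>)}"

definition Lvar_norm :: "(complex \<Rightarrow> real) \<Rightarrow> (complex \<Rightarrow> complex) \<Rightarrow> real" where
  "Lvar_norm p f = Inf {lam. 0 < lam \<and> fock_modular p (\<lambda>z. f z / complex_of_real lam) \<le> 1}"

definition Fvar :: "(complex \<Rightarrow> real) \<Rightarrow> (complex \<Rightarrow> complex) set" where
  "Fvar p = {f \<in> Lvar p. f holomorphic_on UNIV}"

end

theory Submission
  imports Defs "HOL-Complex_Analysis.Complex_Analysis"
begin


lemma meas_Complex: "(\<lambda>(x,y). Complex x y) \<in> borel_measurable (borel :: (real \<times> real) measure)"
proof -
  have "continuous_on UNIV (\<lambda>(x::real,y::real). Complex x y)"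
    unfolding Complex_eq case_prod_unfold by (intro continuous_intros)
  then show ?thesis by (rule borel_measurable_continuous_onI)
qed

lemma lborel_complex_eq:
  "lborel = distr (lborel \<Otimes>\<^sub>M lborel) borel (\<lambda>(x,y). Complex x y)"
proof (rule lborel_eqI)
  fix l u :: complex
  assume le: "\<And>b. b \<in> Basis \<Longrightarrow> l \<bullet> b \<le> u \<bullet> b"
  have "Re l \<le> Re u" "Im l \<le> Im u" using le[of 1] le[of \<i>] by auto
  have m: "(\<lambda>(x,y). Complex x y) \<in> measurable (lborel \<Otimes>\<^sub>M lborel) borel"
    using meas_Complex by (simp add: lborel_prod)
  have pre: "(\<lambda>(x,y). Complex x y) -` box l u \<inter> space (lborel \<Otimes>\<^sub>M lborel)
        = {Re l<..<Re u} \<times> {Im l<..<Im u}"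
    by (auto simp: box_def Basis_complex_def space_pair_measure)
  have "emeasure (distr (lborel \<Otimes>\<^sub>M lborel) borel (\<lambda>(x,y). Complex x y)) (box l u)
      = emeasure (lborel \<Otimes>\<^sub>M lborel) ({Re l<..<Re u} \<times> {Im l<..<Im u})"
    by (subst emeasure_distr[OF m]) (auto simp: pre)
  also have "\<dots> = ennreal (Re u - Re l) * ennreal (Im u - Im l)"
    using \<open>Re l \<le> Re u\<close> \<open>Im l \<le> Im u\<close>
    by (simp add: lborel.emeasure_pair_measure_Times)
  also have "\<dots> = (\<Prod>b\<in>Basis. (u - l) \<bullet> b)"
    using \<open>Re l \<le> Re u\<close> \<open>Im l \<le> Im u\<close>
    by (simp add: Basis_complex_def ennreal_mult)
  finally show "emeasure (distr (lborel \<Otimes>\<^sub>M lborel) borel (\<lambda>(x,y). Complex x y)) (box l u)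
      = (\<Prod>b\<in>Basis. (u - l) \<bullet> b)" .
qed simp

lemma nn_integral_complex_xy:
  fixes f :: "complex \<Rightarrow> ennreal"
  assumes f: "f \<in> borel_measurable borel"
  shows "(\<integral>\<^sup>+ w. f w \<partial>lborel) = (\<integral>\<^sup>+ x. \<integral>\<^sup>+ y. f (Complex x y) \<partial>lborel \<partial>lborel)"
proof -
  have m: "(\<lambda>(x,y). Complex x y) \<in> measurable (lborel \<Otimes>\<^sub>M lborel) borel"
    using meas_Complex by (simp add: lborel_prod)
  have m2: "(\<lambda>z. f (case z of (x, y) \<Rightarrow> Complex x y)) \<in> borel_measurable (lborel \<Otimes>\<^sub>M lborel)"
    using measurable_comp[OF m f] by (simp add: comp_def)
  have "(\<integral>\<^sup>+ w. f w \<partial>lborel) = (\<integral>\<^sup>+ z. f (case z of (x,y) \<Rightarrow> Complex x y) \<partial>(lborel \<Otimes>\<^sub>M lborel))"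
  proof -
    have f': "f \<in> borel_measurable (distr (lborel \<Otimes>\<^sub>M lborel) borel (\<lambda>(x,y). Complex x y))"
      using f by (simp add: measurable_cong_sets[OF sets_distr refl])
    show ?thesis by (subst lborel_complex_eq) (simp add: nn_integral_distr[OF m f'])
  qed
  also have "\<dots> = (\<integral>\<^sup>+ x. \<integral>\<^sup>+ y. f (Complex x y) \<partial>lborel \<partial>lborel)"
    using lborel.nn_integral_fst[OF m2] by simp
  finally show ?thesis .
qed

lemma nn_integral_complex_yx:
  fixes f :: "complex \<Rightarrow> ennreal"
  assumes f: "f \<in> borel_measurable borel"
  shows "(\<integral>\<^sup>+ w. f w \<partial>lborel) = (\<integral>\<^sup>+ y. \<integral>\<^sup>+ x. f (Complex x y) \<partial>lborel \<partial>lborel)"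
proof -
  have m: "(\<lambda>(x,y). Complex x y) \<in> measurable (lborel \<Otimes>\<^sub>M lborel) borel"
    using meas_Complex by (simp add: lborel_prod)
  have m2: "(\<lambda>(x,y). f (Complex x y)) \<in> borel_measurable (lborel \<Otimes>\<^sub>M lborel)"
    using measurable_comp[OF m f] by (simp add: comp_def case_prod_unfold)
  show ?thesis
    using nn_integral_complex_xy[OF f] lborel_pair.Fubini'[OF m2] by simp
qed


lemma borel_comp_cont:
  fixes f :: "'b::topological_space \<Rightarrow> ennreal" and \<phi> :: "'a::topological_space \<Rightarrow> 'b"
  assumes "continuous_on UNIV \<phi>" "f \<in> borel_measurable borel"
  shows "(\<lambda>w. f (\<phi> w)) \<in> borel_measurable borel"
  using measurable_comp[OF borel_measurable_continuous_onI[OF assms(1)] assms(2)]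
  by (simp add: comp_def)

lemma shear_x:
  fixes f :: "complex \<Rightarrow> ennreal"
  assumes f: "f \<in> borel_measurable borel"
  shows "(\<integral>\<^sup>+ w. f (Complex (Re w + a * Im w) (Im w)) \<partial>lborel) = (\<integral>\<^sup>+ w. f w \<partial>lborel)"
proof -
  have c: "continuous_on UNIV (\<lambda>w. Complex (Re w + a * Im w) (Im w))"
    unfolding Complex_eq by (intro continuous_intros)
  have m: "(\<lambda>w. f (Complex (Re w + a * Im w) (Im w))) \<in> borel_measurable borel"
    by (rule borel_comp_cont[OF c f])
  have mc: "(\<lambda>x. f (Complex x y)) \<in> borel_measurable borel" for y
    by (rule borel_comp_cont[OF _ f]) (unfold Complex_eq, intro continuous_intros)
  have inner: "(\<integral>\<^sup>+ x. f (Complex (x + a * y) y) \<partial>lborel) = (\<integral>\<^sup>+ x. f (Complex x y) \<partial>lborel)" for y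
    using nn_integral_real_affine[OF mc[of y], of 1 "a*y"] by (simp add: add.commute)
  show ?thesis
    unfolding nn_integral_complex_yx[OF m] nn_integral_complex_yx[OF f]
    by (simp add: inner)
qed

lemma shear_y:
  fixes f :: "complex \<Rightarrow> ennreal"
  assumes f: "f \<in> borel_measurable borel"
  shows "(\<integral>\<^sup>+ w. f (Complex (Re w) (Im w + b * Re w)) \<partial>lborel) = (\<integral>\<^sup>+ w. f w \<partial>lborel)"
proof -
  have c: "continuous_on UNIV (\<lambda>w. Complex (Re w) (Im w + b * Re w))"
    unfolding Complex_eq by (intro continuous_intros)
  have m: "(\<lambda>w. f (Complex (Re w) (Im w + b * Re w))) \<in> borel_measurable borel"
    by (rule borel_comp_cont[OF c f])
  have mc: "(\<lambda>y. f (Complex x y)) \<in> borel_measurable borel" for x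
    by (rule borel_comp_cont[OF _ f]) (unfold Complex_eq, intro continuous_intros)
  have inner: "(\<integral>\<^sup>+ y. f (Complex x (y + b * x)) \<partial>lborel) = (\<integral>\<^sup>+ y. f (Complex x y) \<partial>lborel)" for x
    using nn_integral_real_affine[OF mc[of x], of 1 "b*x"] by (simp add: add.commute)
  show ?thesis
    unfolding nn_integral_complex_xy[OF m] nn_integral_complex_xy[OF f]
    by (simp add: inner)
qed

lemma rot_aux:
  fixes f :: "complex \<Rightarrow> ennreal"
  assumes f: "f \<in> borel_measurable borel" and u: "cmod u = 1" and nu: "u \<noteq> -1"
  shows "(\<integral>\<^sup>+ w. f (u * w) \<partial>lborel) = (\<integral>\<^sup>+ w. f w \<partial>lborel)"
proof -
  define c where "c = Re u"
  define s where "s = Im u"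
  define t where "t = s / (1 + c)"
  have cs: "c\<^sup>2 + s\<^sup>2 = 1" using u unfolding c_def s_def cmod_def
    by (simp add: power2_eq_square)
  have c1: "1 + c \<noteq> 0"
  proof
    assume "1 + c = 0"
    then have "c = -1" by simp
    with cs have "s = 0" by (simp add: power2_eq_square)
    with \<open>c = -1\<close> have "u = -1" unfolding c_def s_def by (simp add: complex_eq_iff)
    with nu show False by simp
  qed
  have st: "s * t = 1 - c"
    unfolding t_def using c1 cs by (simp add: field_simps power2_eq_square)
  have ts: "t * (1 + c) = s" unfolding t_def using c1 by simp
  define Sx where "Sx = (\<lambda>a (w::complex). Complex (Re w + a * Im w) (Im w))"
  define Sy where "Sy = (\<lambda>b (w::complex). Complex (Re w) (Im w + b * Re w))"
  have eq: "u * w = Sx (-t) (Sy s (Sx (-t) w))" for w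
  proof (rule complex_eqI)
    show "Re (u * w) = Re (Sx (- t) (Sy s (Sx (- t) w)))"
      unfolding Sx_def Sy_def using st ts
      by (simp add: c_def[symmetric] s_def[symmetric]) algebra
    show "Im (u * w) = Im (Sx (- t) (Sy s (Sx (- t) w)))"
      unfolding Sx_def Sy_def using st ts
      by (simp add: c_def[symmetric] s_def[symmetric]) algebra
  qed
  have cx: "continuous_on UNIV (Sx a)" for a
    unfolding Sx_def Complex_eq by (intro continuous_intros)
  have cy: "continuous_on UNIV (Sy a)" for a
    unfolding Sy_def Complex_eq by (intro continuous_intros)
  have m1: "(\<lambda>w. f (Sx (-t) w)) \<in> borel_measurable borel" by (rule borel_comp_cont[OF cx f])
  have m2: "(\<lambda>w. f (Sx (-t) (Sy s w))) \<in> borel_measurable borel"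
    by (rule borel_comp_cont[OF cy m1])
  have "(\<integral>\<^sup>+ w. f (u * w) \<partial>lborel) = (\<integral>\<^sup>+ w. f (Sx (-t) (Sy s (Sx (-t) w))) \<partial>lborel)"
    by (simp add: eq)
  also have "\<dots> = (\<integral>\<^sup>+ w. f (Sx (-t) (Sy s w)) \<partial>lborel)"
    using shear_x[OF m2, of "-t"] unfolding Sx_def by simp
  also have "\<dots> = (\<integral>\<^sup>+ w. f (Sx (-t) w) \<partial>lborel)"
    using shear_y[OF m1, of s] unfolding Sy_def by simp
  also have "\<dots> = (\<integral>\<^sup>+ w. f w \<partial>lborel)"
    using shear_x[OF f, of "-t"] unfolding Sx_def by simp
  finally show ?thesis .
qed

lemma rot:
  fixes f :: "complex \<Rightarrow> ennreal"
  assumes f: "f \<in> borel_measurable borel" and u: "cmod u = 1"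
  shows "(\<integral>\<^sup>+ w. f (u * w) \<partial>lborel) = (\<integral>\<^sup>+ w. f w \<partial>lborel)"
proof (cases "u = -1")
  case False then show ?thesis using rot_aux[OF f u] by simp
next
  case True
  have mi: "(\<lambda>w. f (\<i> * w)) \<in> borel_measurable borel"
    by (rule borel_comp_cont[OF _ f]) (intro continuous_intros)
  have "(\<integral>\<^sup>+ w. f (u * w) \<partial>lborel) = (\<integral>\<^sup>+ w. f (\<i> * (\<i> * w)) \<partial>lborel)"
    using True by (simp flip: mult.assoc)
  also have "\<dots> = (\<integral>\<^sup>+ w. f (\<i> * w) \<partial>lborel)"
    using rot_aux[OF mi, of \<i>] by (simp add: complex_eq_iff)
  also have "\<dots> = (\<integral>\<^sup>+ w. f w \<partial>lborel)"
    using rot_aux[OF f, of \<i>] by (simp add: complex_eq_iff)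
  finally show ?thesis .
qed



definition eang :: "real \<Rightarrow> complex" where "eang t = exp (2 * of_real pi * \<i> * of_real t)"

lemma cmod_eang[simp]: "cmod (eang t) = 1"
  unfolding eang_def by (simp add: norm_exp_eq_Re)

lemma eang_nz[simp]: "eang t \<noteq> 0" unfolding eang_def by simp

lemma cont_eang: "continuous_on UNIV eang"
  unfolding eang_def by (intro continuous_intros)

lemma gauss_mean:
  assumes H: "H holomorphic_on UNIV"
  shows "((\<lambda>t. H (eang t)) has_integral H 0) {0..1}"
proof -
  have "((\<lambda>u. H u / (u - 0)) has_contour_integral (2 * of_real pi * \<i> * H 0)) (circlepath 0 1)"
    by (rule Cauchy_integral_circlepath)
      (auto intro: holomorphic_on_imp_continuous_on holomorphic_on_subset[OF H])
  then have "((\<lambda>t. H (circlepath 0 1 t) / circlepath 0 1 t * vector_derivative (circlepath 0 1) (at t within {0..1}))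
      has_integral (2 * of_real pi * \<i> * H 0)) {0..1}"
    by (simp add: has_contour_integral_def)
  moreover have "H (circlepath 0 1 t) / circlepath 0 1 t * vector_derivative (circlepath 0 1) (at t within {0..1})
      = H (eang t) * (2 * of_real pi * \<i>)" if "t \<in> {0..1}" for t
    using that by (simp add: vector_derivative_circlepath01) (simp add: circlepath eang_def)
  ultimately have "((\<lambda>t. H (eang t) * (2 * of_real pi * \<i>)) has_integral (2 * of_real pi * \<i> * H 0)) {0..1}"
    using has_integral_cong[of "{0..1}"] by (smt (verit, ccfv_threshold))
  from has_integral_mult_right[OF this, of "1 / (2 * of_real pi * \<i>)"]
  show ?thesis by simp
qed

lemma mean_ineq0:
  assumes G: "G holomorphic_on UNIV"
  shows "emeasure lborel (ball (0::complex) 1) * ennreal (cmod (G 0))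
     \<le> (\<integral>\<^sup>+ w. indicator (ball 0 1) w * ennreal (cmod (G w)) \<partial>lborel)"
proof -
  define B where "B = ball (0::complex) 1"
  have cG: "continuous_on UNIV G" using G holomorphic_on_imp_continuous_on by blast
  have cnG: "continuous_on UNIV (\<lambda>w. cmod (G w))" using cG by (intro continuous_intros)
  have [measurable]: "(\<lambda>w. cmod (G w)) \<in> borel_measurable borel"
    using borel_measurable_continuous_onI[OF cnG] .
  have [measurable]: "ball (0::complex) 1 \<in> sets borel" by simp
  define f where "f w = indicator B w * ennreal (cmod (G w))" for w
  have fm: "f \<in> borel_measurable borel"
    unfolding f_def B_def by measurable
  define A where "A = (\<integral>\<^sup>+ w. f w \<partial>lborel)"
  have rotA: "(\<integral>\<^sup>+ w. indicator B w * ennreal (cmod (G (eang t * w))) \<partial>lborel) = A" for t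
  proof -
    have "(\<integral>\<^sup>+ w. indicator B w * ennreal (cmod (G (eang t * w))) \<partial>lborel) = (\<integral>\<^sup>+ w. f (eang t * w) \<partial>lborel)"
      unfolding f_def B_def by (intro nn_integral_cong) (simp add: indicator_def norm_mult)
    also have "\<dots> = A" unfolding A_def by (rule rot[OF fm]) simp
    finally show ?thesis .
  qed
  define h where "h = (\<lambda>t w. indicator {0..1::real} t * (indicator B w * ennreal (cmod (G (eang t * w)))))"
  have cont2: "continuous_on UNIV (\<lambda>z::real\<times>complex. cmod (G (eang (fst z) * snd z)))"
  proof -
    have e1: "continuous_on UNIV (\<lambda>z::real\<times>complex. eang (fst z))"
      using continuous_on_compose2[OF cont_eang continuous_on_fst[OF continuous_on_id]] by auto
    have "continuous_on UNIV (\<lambda>z::real\<times>complex. eang (fst z) * snd z)"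
      by (intro continuous_intros e1)
    then show ?thesis
      using e1 by (intro continuous_intros continuous_on_compose2[OF cG]) auto
  qed
  have hm: "case_prod h \<in> borel_measurable (lborel \<Otimes>\<^sub>M lborel)"
  proof -
    have [measurable]: "(\<lambda>z::real\<times>complex. cmod (G (eang (fst z) * snd z))) \<in> borel_measurable borel"
      using borel_measurable_continuous_onI[OF cont2] .
    have [measurable]: "{0..1::real} \<times> (UNIV::complex set) \<in> sets borel"
      by (simp add: borel_closed closed_Times)
    have [measurable]: "(UNIV::real set) \<times> ball (0::complex) 1 \<in> sets borel"
      by (simp add: borel_open open_Times)
    have eqh: "(\<lambda>z::real\<times>complex. h (fst z) (snd z)) = (\<lambda>z. indicator ({0..1::real} \<times> (UNIV::complex set)) z *
       (indicator ((UNIV::real set) \<times> ball (0::complex) 1) z * ennreal (cmod (G (eang (fst z) * snd z)))))"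
      unfolding h_def B_def by (auto simp: indicator_def fun_eq_iff)
    have "(\<lambda>z::real\<times>complex. h (fst z) (snd z)) \<in> borel_measurable borel"
      unfolding eqh by measurable
    then show ?thesis by (simp add: lborel_prod case_prod_unfold)
  qed
  have "A = (\<integral>\<^sup>+ t. indicator {0..1::real} t * A \<partial>lborel)"
    by (simp add: nn_integral_cmult_indicator mult.commute)
  also have "\<dots> = (\<integral>\<^sup>+ t. \<integral>\<^sup>+ w. h t w \<partial>lborel \<partial>lborel)"
  proof (intro nn_integral_cong)
    fix t
    have ct: "continuous_on UNIV (\<lambda>w. cmod (G (eang t * w)))"
      by (intro continuous_intros continuous_on_compose2[OF cG]) auto
    have [measurable]: "(\<lambda>w. cmod (G (eang t * w))) \<in> borel_measurable borel"
      using borel_measurable_continuous_onI[OF ct] .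
    have m: "(\<lambda>w. indicator B w * ennreal (cmod (G (eang t * w)))) \<in> borel_measurable lborel"
      unfolding B_def by measurable
    show "indicator {0..1} t * A = (\<integral>\<^sup>+ w. h t w \<partial>lborel)"
      unfolding h_def by (subst nn_integral_cmult[OF m]) (simp add: rotA)
  qed
  also have "\<dots> = (\<integral>\<^sup>+ w. \<integral>\<^sup>+ t. h t w \<partial>lborel \<partial>lborel)"
    by (rule lborel_pair.Fubini'[OF hm, symmetric])
  also have "\<dots> \<ge> (\<integral>\<^sup>+ w. indicator B w * ennreal (cmod (G 0)) \<partial>lborel)"
  proof (intro nn_integral_mono)
    fix w
    have ctw: "continuous_on UNIV (\<lambda>t. cmod (G (eang t * w)))"
      by (intro continuous_intros continuous_on_compose2[OF cG] cont_eang) auto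
    have ci: "continuous_on {0..1} (\<lambda>t. cmod (G (eang t * w)))"
      using continuous_on_subset[OF ctw] by blast
    have I1: "((\<lambda>t. cmod (G (eang t * w))) has_integral integral {0..1} (\<lambda>t. cmod (G (eang t * w)))) {0..1}"
      using integrable_continuous_interval[OF ci] by (simp add: has_integral_integral)
    have Hh: "(\<lambda>u. G (u * w)) holomorphic_on UNIV"
      by (intro holomorphic_on_compose_gen[OF _ G, unfolded o_def] holomorphic_intros) auto
    have gm: "((\<lambda>t. G (eang t * w)) has_integral G 0) {0..1}"
      using gauss_mean[OF Hh] by simp
    have "cmod (G 0) \<le> integral {0..1} (\<lambda>t. cmod (G (eang t * w)))"
      using integral_norm_bound_integral[of "\<lambda>t. G (eang t * w)" "{0..1}" "\<lambda>t. cmod (G (eang t * w))"]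
        gm integrable_continuous_interval[OF ci] by (auto simp: integral_unique has_integral_integrable)
    also have "ennreal \<dots> = (\<integral>\<^sup>+ t. ennreal (cmod (G (eang t * w))) * indicator {0..1} t \<partial>lborel)"
      using nn_integral_has_integral_lebesgue'[OF _ I1] by simp
    finally have le: "ennreal (cmod (G 0)) \<le> (\<integral>\<^sup>+ t. ennreal (cmod (G (eang t * w))) * indicator {0..1} t \<partial>lborel)"
      by (simp add: ennreal_leI)
    have [measurable]: "(\<lambda>t. cmod (G (eang t * w))) \<in> borel_measurable borel"
      using borel_measurable_continuous_onI[OF ctw] .
    have mt: "(\<lambda>t. ennreal (cmod (G (eang t * w))) * indicator {0..1} t) \<in> borel_measurable lborel"
      by measurable
    have "(\<integral>\<^sup>+ t. h t w \<partial>lborel) = indicator B w * (\<integral>\<^sup>+ t. ennreal (cmod (G (eang t * w))) * indicator {0..1} t \<partial>lborel)"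
    proof -
      have ac: "\<And>a b c::ennreal. a * (b * c) = b * (c * a)" by (simp add: ac_simps)
      have "(\<integral>\<^sup>+ t. h t w \<partial>lborel) = (\<integral>\<^sup>+ t. indicator B w * (ennreal (cmod (G (eang t * w))) * indicator {0..1} t) \<partial>lborel)"
        unfolding h_def by (rule nn_integral_cong) (rule ac)
      also have "\<dots> = indicator B w * (\<integral>\<^sup>+ t. ennreal (cmod (G (eang t * w))) * indicator {0..1} t \<partial>lborel)"
        by (rule nn_integral_cmult[OF mt])
      finally show ?thesis .
    qed
    then show "indicator B w * ennreal (cmod (G 0)) \<le> (\<integral>\<^sup>+ t. h t w \<partial>lborel)"
      using le by (simp add: mult_left_mono)
  qed
  also have "(\<integral>\<^sup>+ w. indicator B w * ennreal (cmod (G 0)) \<partial>lborel) = emeasure lborel B * ennreal (cmod (G 0))"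
    by (simp add: nn_integral_cmult_indicator mult.commute B_def)
  finally show ?thesis unfolding A_def f_def B_def .
qed



lemma ve_ge1: "var_exponent p \<Longrightarrow> 1 \<le> p z"
  by (simp add: var_exponent_def)

lemma ve_meas[measurable]: "var_exponent p \<Longrightarrow> p \<in> borel_measurable lebesgue"
  by (simp add: var_exponent_def)

lemma integrand_meas:
  assumes p: "var_exponent p" and H: "H \<in> borel_measurable lebesgue"
  shows "(\<lambda>z. ennreal (cmod (H z) powr p z * exp (- p z * (cmod z)\<^sup>2))) \<in> borel_measurable lebesgue"
proof -
  have [measurable]: "(\<lambda>x::complex. x) \<in> borel_measurable lebesgue"
    by (rule measurable_completion) simp
  show ?thesis using ve_meas[OF p] H by measurable
qed

lemma mod_mono:
  assumes p: "var_exponent p" and le: "\<And>z. cmod (H1 z) \<le> cmod (H2 z)"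
  shows "fock_modular p H1 \<le> fock_modular p H2"
  unfolding fock_modular_def
proof (intro nn_integral_mono ennreal_leI mult_right_mono)
  fix z
  show "cmod (H1 z) powr p z \<le> cmod (H2 z) powr p z"
    using ve_ge1[OF p, of z] le[of z] by (intro powr_mono2) auto
qed simp

lemma mod_cong:
  assumes "\<And>z. cmod (H1 z) = cmod (H2 z)"
  shows "fock_modular p H1 = fock_modular p H2"
  unfolding fock_modular_def using assms by simp

lemma powr_midpoint:
  fixes x y q :: real
  assumes "0 \<le> x" "0 \<le> y" "1 \<le> q"
  shows "((x + y) / 2) powr q \<le> (x powr q + y powr q) / 2"
proof -
  have h: "(z / 2) powr q \<le> z powr q / 2" if "0 \<le> z" for z :: real
  proof -
    have "(z / 2) powr q = z powr q * (1/2) powr q"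
      using that by (simp add: powr_divide powr_minus_divide)
    also have "(1/2::real) powr q \<le> (1/2) powr 1"
      using assms(3) by (intro powr_mono') auto
    then have "z powr q * (1/2) powr q \<le> z powr q * (1/2)"
      by (intro mult_left_mono) auto
    finally show ?thesis by simp
  qed
  show ?thesis
  proof (cases "x = 0 \<or> y = 0")
    case True
    then show ?thesis
    proof
      assume "x = 0" then show ?thesis using h[OF assms(2)] by simp
    next
      assume "y = 0" then show ?thesis using h[OF assms(1)] by simp
    qed
  next
    case False
    then have "x \<in> {0<..}" "y \<in> {0<..}" using assms by auto
    have "((1 - 1/2) *\<^sub>R x + (1/2) *\<^sub>R y) powr q \<le> (1 - 1/2) * x powr q + (1/2) * y powr q"
      using convex_onD[OF powr_convex[OF assms(3)], of "1/2" x y] \<open>x \<in> {0<..}\<close> \<open>y \<in> {0<..}\<close> by simp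
    then show ?thesis by (simp add: add_divide_distrib)
  qed
qed

lemma mod_convex:
  assumes p: "var_exponent p" and H1: "H1 \<in> borel_measurable lebesgue" and H2: "H2 \<in> borel_measurable lebesgue"
  shows "2 * fock_modular p (\<lambda>z. (H1 z + H2 z) / 2) \<le> fock_modular p H1 + fock_modular p H2"
proof -
  have H3: "(\<lambda>z. (H1 z + H2 z) / 2) \<in> borel_measurable lebesgue" using H1 H2 by measurable
  have pt: "2 * ennreal (cmod ((H1 z + H2 z) / 2) powr p z * exp (- p z * (cmod z)\<^sup>2))
      \<le> ennreal (cmod (H1 z) powr p z * exp (- p z * (cmod z)\<^sup>2)) + ennreal (cmod (H2 z) powr p z * exp (- p z * (cmod z)\<^sup>2))" for z
  proof -
    define E where "E = exp (- p z * (cmod z)\<^sup>2)"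
    have q: "1 \<le> p z" using ve_ge1[OF p] .
    have "cmod ((H1 z + H2 z) / 2) powr p z \<le> ((cmod (H1 z) + cmod (H2 z)) / 2) powr p z"
      using q by (intro powr_mono2) (auto simp: norm_divide norm_triangle_ineq divide_right_mono)
    also have "\<dots> \<le> (cmod (H1 z) powr p z + cmod (H2 z) powr p z) / 2"
      by (rule powr_midpoint) (use q in auto)
    finally have i1: "2 * cmod ((H1 z + H2 z) / 2) powr p z \<le> cmod (H1 z) powr p z + cmod (H2 z) powr p z"
      by simp
    have E0: "0 \<le> E" unfolding E_def by simp
    have "(2 * cmod ((H1 z + H2 z) / 2) powr p z) * E \<le> (cmod (H1 z) powr p z + cmod (H2 z) powr p z) * E"
      using i1 E0 by (rule mult_right_mono)
    then have "2 * (cmod ((H1 z + H2 z) / 2) powr p z * E) \<le> cmod (H1 z) powr p z * E + cmod (H2 z) powr p z * E"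
      by (simp add: algebra_simps)
    then have "ennreal (2 * (cmod ((H1 z + H2 z) / 2) powr p z * E)) \<le> ennreal (cmod (H1 z) powr p z * E + cmod (H2 z) powr p z * E)"
      by (rule ennreal_leI)
    then show ?thesis unfolding E_def[symmetric]
      by (simp add: ennreal_mult ennreal_plus[symmetric] E_def)
  qed
  have "2 * fock_modular p (\<lambda>z. (H1 z + H2 z) / 2) = (\<integral>\<^sup>+ z. 2 * ennreal (cmod ((H1 z + H2 z) / 2) powr p z * exp (- p z * (cmod z)\<^sup>2)) \<partial>lebesgue)"
    unfolding fock_modular_def by (rule nn_integral_cmult[symmetric]) (rule integrand_meas[OF p H3])
  also have "\<dots> \<le> (\<integral>\<^sup>+ z. ennreal (cmod (H1 z) powr p z * exp (- p z * (cmod z)\<^sup>2)) + ennreal (cmod (H2 z) powr p z * exp (- p z * (cmod z)\<^sup>2)) \<partial>lebesgue)"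
    by (intro nn_integral_mono pt)
  also have "\<dots> = fock_modular p H1 + fock_modular p H2"
    unfolding fock_modular_def by (rule nn_integral_add) (rule integrand_meas[OF p H1], rule integrand_meas[OF p H2])
  finally show ?thesis .
qed


lemma mod_zero: "fock_modular p (\<lambda>z. 0) = 0"
  unfolding fock_modular_def by simp

lemma Lvar_meas: "H \<in> Lvar p \<Longrightarrow> H \<in> borel_measurable lebesgue"
  by (simp add: Lvar_def)

lemma Lvar_add:
  assumes p: "var_exponent p" and f: "f \<in> Lvar p" and g: "g \<in> Lvar p"
  shows "(\<lambda>z. f z + g z) \<in> Lvar p"
proof -
  obtain l1 where l1: "l1 > 0" "fock_modular p (\<lambda>z. complex_of_real l1 * f z) < \<infinity>"
    using f by (auto simp: Lvar_def)
  obtain l2 where l2: "l2 > 0" "fock_modular p (\<lambda>z. complex_of_real l2 * g z) < \<infinity>"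
    using g by (auto simp: Lvar_def)
  define l where "l = min l1 l2"
  have l0: "l > 0" using l1 l2 by (simp add: l_def)
  have fm[measurable]: "f \<in> borel_measurable lebesgue" and gm[measurable]: "g \<in> borel_measurable lebesgue"
    using f g by (auto simp: Lvar_def)
  have "fock_modular p (\<lambda>z. complex_of_real l * f z) \<le> fock_modular p (\<lambda>z. complex_of_real l1 * f z)"
    using l1 l0 by (intro mod_mono[OF p]) (auto simp: norm_mult l_def intro!: mult_right_mono)
  then have F: "fock_modular p (\<lambda>z. complex_of_real l * f z) < \<infinity>" using l1 by auto
  have "fock_modular p (\<lambda>z. complex_of_real l * g z) \<le> fock_modular p (\<lambda>z. complex_of_real l2 * g z)"
    using l2 l0 by (intro mod_mono[OF p]) (auto simp: norm_mult l_def intro!: mult_right_mono)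
  then have G: "fock_modular p (\<lambda>z. complex_of_real l * g z) < \<infinity>" using l2 by auto
  have "2 * fock_modular p (\<lambda>z. (complex_of_real l * f z + complex_of_real l * g z) / 2)
     \<le> fock_modular p (\<lambda>z. complex_of_real l * f z) + fock_modular p (\<lambda>z. complex_of_real l * g z)"
    by (rule mod_convex[OF p]) measurable
  also have "\<dots> < \<infinity>" using F G by simp
  finally have "fock_modular p (\<lambda>z. (complex_of_real l * f z + complex_of_real l * g z) / 2) < \<infinity>"
    by (auto simp add: ennreal_mult_less_top)
  moreover have "fock_modular p (\<lambda>z. (complex_of_real l * f z + complex_of_real l * g z) / 2)
      = fock_modular p (\<lambda>z. complex_of_real (l/2) * (f z + g z))"
    by (rule mod_cong) (simp add: algebra_simps)
  ultimately show ?thesis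
    using l0 unfolding Lvar_def by (auto intro!: exI[of _ "l/2"])
qed

lemma Lvar_cmult:
  assumes p: "var_exponent p" and f: "f \<in> Lvar p"
  shows "(\<lambda>z. c * f z) \<in> Lvar p"
proof (cases "c = 0")
  case True
  then show ?thesis by (auto simp: Lvar_def mod_zero intro!: exI[of _ 1])
next
  case False
  obtain l where l: "l > 0" "fock_modular p (\<lambda>z. complex_of_real l * f z) < \<infinity>"
    using f by (auto simp: Lvar_def)
  have fm[measurable]: "f \<in> borel_measurable lebesgue" using f by (auto simp: Lvar_def)
  have "fock_modular p (\<lambda>z. complex_of_real (l / cmod c) * (c * f z)) = fock_modular p (\<lambda>z. complex_of_real l * f z)"
    using False l by (intro mod_cong) (simp add: norm_mult norm_divide)
  then show ?thesis using l False unfolding Lvar_def by (auto intro!: exI[of _ "l / cmod c"])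
qed

lemma Lvar_diff:
  assumes p: "var_exponent p" and f: "f \<in> Lvar p" and g: "g \<in> Lvar p"
  shows "(\<lambda>z. f z - g z) \<in> Lvar p"
  using Lvar_add[OF p f Lvar_cmult[OF p g, of "-1"]] by simp

lemma Lvar_unit:
  assumes p: "var_exponent p" and f: "f \<in> Lvar p"
  shows "\<exists>lam>0. fock_modular p (\<lambda>z. f z / complex_of_real lam) \<le> 1"
proof -
  obtain l where l: "l > 0" "fock_modular p (\<lambda>z. complex_of_real l * f z) < \<infinity>"
    using f by (auto simp: Lvar_def)
  have fm[measurable]: "f \<in> borel_measurable lebesgue" using f by (auto simp: Lvar_def)
  obtain r where r: "fock_modular p (\<lambda>z. complex_of_real l * f z) = ennreal r" "0 \<le> r"
    using l(2) by (cases "fock_modular p (\<lambda>z. complex_of_real l * f z)") auto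
  define c where "c = max 1 r"
  have c1: "1 \<le> c" "r \<le> c" by (auto simp: c_def)
  define lam where "lam = c / l"
  have lam0: "lam > 0" using c1 l by (simp add: lam_def)
  have pt: "ennreal (cmod (f z / complex_of_real lam) powr p z * exp (- p z * (cmod z)\<^sup>2))
     \<le> ennreal (1 / c) * ennreal (cmod (complex_of_real l * f z) powr p z * exp (- p z * (cmod z)\<^sup>2))" for z
  proof -
    have q: "1 \<le> p z" by (rule ve_ge1[OF p])
    have "cmod (f z / complex_of_real lam) = cmod (complex_of_real l * f z) / c"
      using l c1 by (simp add: lam_def norm_mult norm_divide field_simps)
    then have "cmod (f z / complex_of_real lam) powr p z = cmod (complex_of_real l * f z) powr p z / c powr p z"
      using c1 by (simp add: powr_divide)
    also have "\<dots> \<le> cmod (complex_of_real l * f z) powr p z / c"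
    proof (rule divide_left_mono)
      show "c \<le> c powr p z" using powr_mono[OF q c1(1)] c1 by simp
    qed (use c1 in auto)
    finally have i: "cmod (f z / complex_of_real lam) powr p z \<le> cmod (complex_of_real l * f z) powr p z / c" .
    have "cmod (f z / complex_of_real lam) powr p z * exp (- p z * (cmod z)\<^sup>2)
      \<le> (cmod (complex_of_real l * f z) powr p z / c) * exp (- p z * (cmod z)\<^sup>2)"
      by (rule mult_right_mono[OF i]) simp
    then have "cmod (f z / complex_of_real lam) powr p z * exp (- p z * (cmod z)\<^sup>2)
      \<le> (1 / c) * (cmod (complex_of_real l * f z) powr p z * exp (- p z * (cmod z)\<^sup>2))"
      by simp
    then show ?thesis using c1 by (simp add: ennreal_mult[symmetric] ennreal_leI)
  qed
  have "fock_modular p (\<lambda>z. f z / complex_of_real lam)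
     \<le> (\<integral>\<^sup>+ z. ennreal (1 / c) * ennreal (cmod (complex_of_real l * f z) powr p z * exp (- p z * (cmod z)\<^sup>2)) \<partial>lebesgue)"
    unfolding fock_modular_def by (intro nn_integral_mono pt)
  also have "\<dots> = ennreal (1/c) * fock_modular p (\<lambda>z. complex_of_real l * f z)"
    unfolding fock_modular_def by (rule nn_integral_cmult) (rule integrand_meas[OF p], measurable)
  also have "\<dots> = ennreal (1/c) * ennreal r" using r(1) by simp
  also have "\<dots> = ennreal ((1/c) * r)" by (rule ennreal_mult[symmetric]) (use c1 r in auto)
  also have "\<dots> \<le> ennreal 1"
  proof (rule ennreal_leI)
    show "1 / c * r \<le> 1" using c1 r by (simp add: divide_le_eq_1)
  qed
  also have "ennreal 1 = 1" by simp
  finally show ?thesis using lam0 by blast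
qed


lemma norm_lt:
  assumes p: "var_exponent p" and H: "H \<in> Lvar p" and lt: "Lvar_norm p H < e"
  shows "fock_modular p (\<lambda>z. H z / complex_of_real e) \<le> 1"
proof -
  define S where "S = {lam. 0 < lam \<and> fock_modular p (\<lambda>z. H z / complex_of_real lam) \<le> 1}"
  have ne: "S \<noteq> {}" using Lvar_unit[OF p H] by (auto simp: S_def)
  have bdd: "bdd_below S" by (auto simp: S_def bdd_below_def intro!: exI[of _ 0])
  have "Inf S < e" using lt by (simp add: Lvar_norm_def S_def)
  then obtain x where x: "x \<in> S" "x < e" using cInf_lessD[OF ne] by blast
  have x0: "0 < x" using x by (simp add: S_def)
  have "fock_modular p (\<lambda>z. H z / complex_of_real e) \<le> fock_modular p (\<lambda>z. H z / complex_of_real x)"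
  proof (rule mod_mono[OF p])
    fix z
    show "cmod (H z / complex_of_real e) \<le> cmod (H z / complex_of_real x)"
      using x0 x(2) by (simp add: norm_divide divide_left_mono)
  qed
  also have "\<dots> \<le> 1" using x by (simp add: S_def)
  finally show ?thesis .
qed

lemma norm_le:
  assumes e: "0 < e" and m: "fock_modular p (\<lambda>z. H z / complex_of_real e) \<le> 1"
  shows "0 \<le> Lvar_norm p H \<and> Lvar_norm p H \<le> e"
proof -
  define S where "S = {lam. 0 < lam \<and> fock_modular p (\<lambda>z. H z / complex_of_real lam) \<le> 1}"
  have eS: "e \<in> S" using e m by (simp add: S_def)
  have bdd: "bdd_below S" by (auto simp: S_def bdd_below_def intro!: exI[of _ 0])
  have "Inf S \<le> e" using cInf_lower[OF eS bdd] .
  moreover have "0 \<le> Inf S" using eS by (intro cInf_greatest) (auto simp: S_def)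
  ultimately show ?thesis by (simp add: Lvar_norm_def S_def)
qed

lemma mod_fatou:
  assumes p: "var_exponent p" and Hm: "\<And>n. H n \<in> borel_measurable lebesgue"
    and lim: "\<And>z. (\<lambda>n. H n z) \<longlonglongrightarrow> H0 z"
    and ev: "eventually (\<lambda>n. fock_modular p (H n) \<le> c) sequentially"
  shows "fock_modular p H0 \<le> c"
proof -
  define u where "u n z = ennreal (cmod (H n z) powr p z * exp (- p z * (cmod z)\<^sup>2))" for n z
  have um: "u n \<in> borel_measurable lebesgue" for n unfolding u_def by (rule integrand_meas[OF p Hm])
  have ul: "(\<lambda>n. u n z) \<longlonglongrightarrow> ennreal (cmod (H0 z) powr p z * exp (- p z * (cmod z)\<^sup>2))" for z
  proof -
    have q: "0 < p z" using ve_ge1[OF p, of z] by simp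
    have "(\<lambda>n. cmod (H n z)) \<longlonglongrightarrow> cmod (H0 z)" by (intro tendsto_intros lim)
    then have "(\<lambda>n. cmod (H n z) powr p z) \<longlonglongrightarrow> cmod (H0 z) powr p z"
      using q by (intro tendsto_powr') auto
    then have "(\<lambda>n. cmod (H n z) powr p z * exp (- p z * (cmod z)\<^sup>2)) \<longlonglongrightarrow> cmod (H0 z) powr p z * exp (- p z * (cmod z)\<^sup>2)"
      by (rule tendsto_mult_right)
    then show ?thesis unfolding u_def by (rule tendsto_ennrealI)
  qed
  have "fock_modular p H0 = (\<integral>\<^sup>+ z. liminf (\<lambda>n. u n z) \<partial>lebesgue)"
    unfolding fock_modular_def using lim_imp_Liminf[OF _ ul] by simp
  also have "\<dots> \<le> liminf (\<lambda>n. integral\<^sup>N lebesgue (u n))"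
    by (rule nn_integral_liminf[OF um])
  also have "\<dots> \<le> limsup (\<lambda>n. integral\<^sup>N lebesgue (u n))"
    by (rule Liminf_le_Limsup) simp
  also have "\<dots> \<le> c"
  proof (intro Limsup_bounded)
    have "integral\<^sup>N lebesgue (u n) = fock_modular p (H n)" for n
      unfolding u_def fock_modular_def by simp
    then show "\<forall>\<^sub>F n in sequentially. integral\<^sup>N lebesgue (u n) \<le> c" using ev by simp
  qed
  finally show ?thesis .
qed



lemma ball_bound:
  assumes p: "var_exponent p" and M: "AE w in lebesgue. p w \<le> M" and M1: "1 \<le> M"
    and H: "H \<in> borel_measurable lebesgue"
  shows "(\<integral>\<^sup>+ w. indicator (ball z 1) w * ennreal (cmod (H w)) \<partial>lborel)
     \<le> emeasure lborel (ball z 1) + ennreal (exp (M * (cmod z + 1)\<^sup>2)) * fock_modular p H"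
proof -
  define E where "E = exp (M * (cmod z + 1)\<^sup>2)"
  have E0: "0 \<le> E" by (simp add: E_def)
  have pt: "indicator (ball z 1) w * ennreal (cmod (H w))
      \<le> indicator (ball z 1) w + ennreal E * ennreal (cmod (H w) powr p w * exp (- p w * (cmod w)\<^sup>2))"
    if pM: "p w \<le> M" for w
  proof (cases "w \<in> ball z 1")
    case False then show ?thesis by simp
  next
    case True
    have q: "1 \<le> p w" by (rule ve_ge1[OF p])
    have nw: "cmod w \<le> cmod z + 1" using True norm_triangle_ineq2[of w z]
      by (simp add: dist_norm norm_minus_commute)
    have "p w * (cmod w)\<^sup>2 \<le> M * (cmod w)\<^sup>2" using pM by (simp add: mult_right_mono)
    also have "\<dots> \<le> M * (cmod z + 1)\<^sup>2" using M1 nw by (intro mult_left_mono power_mono) auto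
    finally have ex: "1 \<le> E * exp (- p w * (cmod w)\<^sup>2)"
      unfolding E_def by (simp flip: exp_add)
    define X where "X = cmod (H w)"
    have X0: "0 \<le> X" by (simp add: X_def)
    have "X \<le> 1 + X powr p w"
    proof (cases "X \<le> 1")
      case True then show ?thesis using powr_ge_zero[of X "p w"] by linarith
    next
      case False
      then have "X powr 1 \<le> X powr p w" using q by (intro powr_mono) auto
      then show ?thesis using False by simp
    qed
    also have "X powr p w \<le> X powr p w * (E * exp (- p w * (cmod w)\<^sup>2))"
      using ex by (simp add: mult_le_cancel_left1)
    finally have r: "X \<le> 1 + E * (X powr p w * exp (- p w * (cmod w)\<^sup>2))"
      by (simp add: mult_ac)
    have "ennreal X \<le> ennreal (1 + E * (X powr p w * exp (- p w * (cmod w)\<^sup>2)))"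
      by (rule ennreal_leI[OF r])
    also have "\<dots> = 1 + ennreal (E * (X powr p w * exp (- p w * (cmod w)\<^sup>2)))"
      by (subst ennreal_plus) (use E0 in auto)
    also have "ennreal (E * (X powr p w * exp (- p w * (cmod w)\<^sup>2))) = ennreal E * ennreal (X powr p w * exp (- p w * (cmod w)\<^sup>2))"
      by (rule ennreal_mult) (use E0 in auto)
    finally show ?thesis using True by (simp add: X_def)
  qed
  have bm[measurable]: "ball z 1 \<in> sets lebesgue" by simp
  have "(\<integral>\<^sup>+ w. indicator (ball z 1) w * ennreal (cmod (H w)) \<partial>lborel)
      = (\<integral>\<^sup>+ w. indicator (ball z 1) w * ennreal (cmod (H w)) \<partial>lebesgue)"
    by (rule nn_integral_completion[symmetric])
  also have "\<dots> \<le> (\<integral>\<^sup>+ w. indicator (ball z 1) w + ennreal E * ennreal (cmod (H w) powr p w * exp (- p w * (cmod w)\<^sup>2)) \<partial>lebesgue)"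
    by (rule nn_integral_mono_AE) (rule eventually_mono[OF M pt])
  also have "\<dots> = (\<integral>\<^sup>+ w. indicator (ball z 1) w \<partial>lebesgue) + (\<integral>\<^sup>+ w. ennreal E * ennreal (cmod (H w) powr p w * exp (- p w * (cmod w)\<^sup>2)) \<partial>lebesgue)"
    by (rule nn_integral_add) (simp, use integrand_meas[OF p H] in measurable)
  also have "(\<integral>\<^sup>+ w. ennreal E * ennreal (cmod (H w) powr p w * exp (- p w * (cmod w)\<^sup>2)) \<partial>lebesgue) = ennreal E * fock_modular p H"
    unfolding fock_modular_def by (rule nn_integral_cmult) (rule integrand_meas[OF p H])
  also have "(\<integral>\<^sup>+ w. indicator (ball z 1) w \<partial>lebesgue) = emeasure lborel (ball z 1)"
    by (simp add: emeasure_completion)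
  finally show ?thesis by (simp add: E_def)
qed

lemma mean_ineq:
  assumes G: "G holomorphic_on UNIV"
  shows "emeasure lborel (ball (0::complex) 1) * ennreal (cmod (G z))
     \<le> (\<integral>\<^sup>+ w. indicator (ball z 1) w * ennreal (cmod (G w)) \<partial>lborel)"
proof -
  have G': "(\<lambda>w. G (z + w)) holomorphic_on UNIV"
    by (intro holomorphic_on_compose_gen[OF _ G, unfolded o_def] holomorphic_intros) auto
  have cG: "continuous_on UNIV (\<lambda>w. cmod (G w))"
    using G holomorphic_on_imp_continuous_on by (intro continuous_intros) blast
  have [measurable]: "(\<lambda>w. cmod (G w)) \<in> borel_measurable borel"
    using borel_measurable_continuous_onI[OF cG] .
  have [measurable]: "ball z 1 \<in> sets borel" by simp
  define f where "f w = indicator (ball z 1) w * ennreal (cmod (G w))" for w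
  have fm0: "f \<in> borel_measurable borel"
    unfolding f_def[abs_def] by measurable
  have fm: "f \<in> borel_measurable (distr lborel borel ((+) z))"
    using fm0 by (simp add: measurable_cong_sets[OF sets_distr refl])
  have "(\<integral>\<^sup>+ w. f w \<partial>lborel) = (\<integral>\<^sup>+ w. f w \<partial>(distr lborel borel ((+) z)))"
    by (simp add: lborel_distr_plus)
  also have "\<dots> = (\<integral>\<^sup>+ w. f (z + w) \<partial>lborel)"
    by (rule nn_integral_distr[OF _ fm]) simp
  also have "\<dots> = (\<integral>\<^sup>+ w. indicator (ball 0 1) w * ennreal (cmod (G (z + w))) \<partial>lborel)"
    unfolding f_def by (intro nn_integral_cong) (simp add: indicator_def dist_norm)
  finally have eq: "(\<integral>\<^sup>+ w. f w \<partial>lborel) = (\<integral>\<^sup>+ w. indicator (ball 0 1) w * ennreal (cmod (G (z + w))) \<partial>lborel)" .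
  show ?thesis using mean_ineq0[OF G'] eq by (simp add: f_def)
qed

definition Kb :: "real \<Rightarrow> complex \<Rightarrow> real" where
  "Kb M z = (unit_ball_vol 2 + exp (M * (cmod z + 1)\<^sup>2)) / unit_ball_vol 2"

lemma ptwise_bound:
  assumes p: "var_exponent p" and M: "AE w in lebesgue. p w \<le> M" and M1: "1 \<le> M"
    and G: "G holomorphic_on UNIV" and m: "fock_modular p G \<le> 1"
  shows "cmod (G z) \<le> Kb M z"
proof -
  define V where "V = unit_ball_vol 2"
  define E where "E = exp (M * (cmod z + 1)\<^sup>2)"
  have V0: "0 < V" unfolding V_def by (rule unit_ball_vol_pos) simp
  have E0: "0 \<le> E" by (simp add: E_def)
  have eb: "emeasure lborel (ball c 1) = ennreal V" for c :: complex
    using emeasure_ball[where c=c and r=1] by (simp add: V_def)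
  have Gm: "G \<in> borel_measurable lebesgue"
  proof -
    have "continuous_on UNIV G" using G holomorphic_on_imp_continuous_on by blast
    then have "G \<in> borel_measurable borel" by (rule borel_measurable_continuous_onI)
    then show ?thesis by (intro measurable_completion) simp
  qed
  have "ennreal V * ennreal (cmod (G z)) \<le> ennreal V + ennreal E * fock_modular p G"
    using mean_ineq[OF G, of z] ball_bound[OF p M M1 Gm, of z] by (simp add: eb E_def)
  also have "\<dots> \<le> ennreal V + ennreal E * 1"
    by (intro add_left_mono mult_left_mono m) simp
  also have "\<dots> = ennreal (V + E)" using V0 E0 by (simp add: ennreal_plus)
  finally have "ennreal (V * cmod (G z)) \<le> ennreal (V + E)"
    using V0 by (simp add: ennreal_mult)
  then have "V * cmod (G z) \<le> V + E" using V0 E0 by (subst (asm) ennreal_le_iff) auto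
  then show ?thesis using V0 unfolding Kb_def V_def[symmetric] E_def[symmetric]
    by (simp add: field_simps)
qed

lemma ptwise_bound_scaled:
  assumes p: "var_exponent p" and M: "AE w in lebesgue. p w \<le> M" and M1: "1 \<le> M"
    and G: "G holomorphic_on UNIV" and lam: "0 < lam"
    and m: "fock_modular p (\<lambda>z. G z / complex_of_real lam) \<le> 1"
  shows "cmod (G z) \<le> lam * Kb M z"
proof -
  have G': "(\<lambda>z. G z / complex_of_real lam) holomorphic_on UNIV"
    using G lam by (intro holomorphic_intros) auto
  have "cmod (G z / complex_of_real lam) \<le> Kb M z" by (rule ptwise_bound[OF p M M1 G' m])
  then show ?thesis using lam by (simp add: norm_divide field_simps)
qed



lemma Kb_pos: "0 < Kb M z"
  unfolding Kb_def by (intro divide_pos_pos add_pos_pos unit_ball_vol_pos) auto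

lemma Kb_mono:
  assumes "0 \<le> M" "cmod w \<le> r"
  shows "Kb M w \<le> (unit_ball_vol 2 + exp (M * (r + 1)\<^sup>2)) / unit_ball_vol 2"
proof -
  have V: "0 < unit_ball_vol (2::real)" by (rule unit_ball_vol_pos) simp
  have "(cmod w + 1)\<^sup>2 \<le> (r + 1)\<^sup>2" using assms by (intro power_mono) auto
  then have "M * (cmod w + 1)\<^sup>2 \<le> M * (r + 1)\<^sup>2" using assms by (intro mult_left_mono) auto
  then show ?thesis unfolding Kb_def using V by (intro divide_right_mono add_left_mono) auto
qed

lemma holo_cont_meas:
  assumes "g holomorphic_on UNIV"
  shows "g \<in> borel_measurable lebesgue"
proof -
  have "continuous_on UNIV g" using assms holomorphic_on_imp_continuous_on by blast
  then have "g \<in> borel_measurable borel" by (rule borel_measurable_continuous_onI)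
  then show ?thesis by (intro measurable_completion) simp
qed

lemma lu_limit:
  assumes M: "1 \<le> M" and Fh: "\<And>n. F n holomorphic_on UNIV"
    and C: "\<And>e. e > 0 \<Longrightarrow> \<exists>N. \<forall>m\<ge>N. \<forall>n\<ge>N. \<forall>z. cmod (F m z - F n z) \<le> e * Kb M z"
  shows "\<exists>g. g holomorphic_on UNIV \<and> (\<forall>z. (\<lambda>n. F n z) \<longlonglongrightarrow> g z)"
proof -
  have cau: "Cauchy (\<lambda>n. F n z)" for z
  proof (rule metric_CauchyI)
    fix e :: real assume e: "e > 0"
    have K: "0 < Kb M z" by (rule Kb_pos)
    obtain N where N: "\<forall>m\<ge>N. \<forall>n\<ge>N. \<forall>w. cmod (F m w - F n w) \<le> (e / (2 * Kb M z)) * Kb M w"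
      using C[of "e / (2 * Kb M z)"] e K by (meson divide_pos_pos mult_pos_pos zero_less_numeral)
    have "\<forall>m\<ge>N. \<forall>n\<ge>N. dist (F m z) (F n z) < e"
    proof (intro allI impI)
      fix m n assume "m \<ge> N" "n \<ge> N"
      then have "cmod (F m z - F n z) \<le> (e / (2 * Kb M z)) * Kb M z" using N by blast
      also have "\<dots> = e / 2" using K by simp
      finally show "dist (F m z) (F n z) < e" using e by (simp add: dist_norm)
    qed
    then show "\<exists>N. \<forall>m\<ge>N. \<forall>n\<ge>N. dist (F m z) (F n z) < e" by blast
  qed
  define g where "g z = lim (\<lambda>n. F n z)" for z
  have lim: "(\<lambda>n. F n z) \<longlonglongrightarrow> g z" for z
    unfolding g_def using cau[of z] by (simp add: Cauchy_convergent_iff convergent_LIMSEQ_iff)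
  have ul: "uniform_limit (cball z 1) F g sequentially" for z
  proof (unfold uniform_limit_iff, intro allI impI)
    fix e :: real assume e: "e > 0"
    define KK where "KK = (unit_ball_vol 2 + exp (M * (cmod z + 1 + 1)\<^sup>2)) / unit_ball_vol (2::real)"
    have KK: "0 < KK" unfolding KK_def by (intro divide_pos_pos add_pos_pos unit_ball_vol_pos) auto
    have Kw: "Kb M w \<le> KK" if "w \<in> cball z 1" for w
    proof -
      have "cmod w \<le> cmod z + 1" using that norm_triangle_ineq2[of w z]
        by (simp add: dist_norm norm_minus_commute)
      then show ?thesis unfolding KK_def using Kb_mono[of M w "cmod z + 1"] M by simp
    qed
    obtain N where N: "\<forall>m\<ge>N. \<forall>n\<ge>N. \<forall>w. cmod (F m w - F n w) \<le> (e / (2 * KK)) * Kb M w"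
      using C[of "e / (2 * KK)"] e KK by auto
    have "\<forall>n\<ge>N. \<forall>w\<in>cball z 1. dist (F n w) (g w) < e"
    proof (intro allI impI ballI)
      fix n w assume n: "n \<ge> N" and w: "w \<in> cball z 1"
      have b: "cmod (F n w - F m w) \<le> e / 2" if "m \<ge> N" for m
      proof -
        have "cmod (F n w - F m w) \<le> (e / (2 * KK)) * Kb M w" using N n that by blast
        also have "\<dots> \<le> (e / (2 * KK)) * KK" using Kw[OF w] e KK by (intro mult_left_mono) auto
        also have "\<dots> = e / 2" using KK by simp
        finally show ?thesis .
      qed
      have "(\<lambda>m. cmod (F n w - F m w)) \<longlonglongrightarrow> cmod (F n w - g w)"
        by (intro tendsto_intros lim)
      then have "cmod (F n w - g w) \<le> e / 2"
        by (rule LIMSEQ_le_const2) (use b in auto)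
      then show "dist (F n w) (g w) < e" using e by (simp add: dist_norm)
    qed
    then show "\<forall>\<^sub>F n in sequentially. \<forall>x\<in>cball z 1. dist (F n x) (g x) < e"
      unfolding eventually_sequentially by blast
  qed
  have hb: "g holomorphic_on ball z 1" for z
  proof -
    have ev: "\<forall>\<^sub>F n in sequentially. continuous_on (cball z 1) (F n) \<and> F n holomorphic_on ball z 1"
    proof (intro always_eventually allI conjI)
      fix n
      show "continuous_on (cball z 1) (F n)"
        using holomorphic_on_imp_continuous_on[OF Fh[of n]] continuous_on_subset by blast
      show "F n holomorphic_on ball z 1" using holomorphic_on_subset[OF Fh[of n]] by blast
    qed
    obtain "continuous_on (cball z 1) g" "g holomorphic_on ball z 1"
      by (rule holomorphic_uniform_limit[OF ev ul]) simp
    then show ?thesis by blast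
  qed
  have "g holomorphic_on UNIV"
    unfolding holomorphic_on_def
  proof
    fix z :: complex
    have "g field_differentiable (at z)"
      using holomorphic_on_imp_differentiable_at[OF hb[of z]] by simp
    then show "g field_differentiable (at z within UNIV)" by simp
  qed
  then show ?thesis using lim by blast
qed

lemma mod_half:
  assumes p: "var_exponent p" and A: "A \<in> borel_measurable lebesgue" and B: "B \<in> borel_measurable lebesgue"
    and mA: "fock_modular p A \<le> 1" and mB: "fock_modular p B \<le> 1"
  shows "fock_modular p (\<lambda>z. (A z - B z) / 2) \<le> 1"
proof -
  have mB': "fock_modular p (\<lambda>z. - B z) = fock_modular p B" by (rule mod_cong) simp
  have "2 * fock_modular p (\<lambda>z. (A z + - B z) / 2) \<le> fock_modular p A + fock_modular p (\<lambda>z. - B z)"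
    by (rule mod_convex[OF p A]) (use B in measurable)
  also have "\<dots> \<le> 1 + 1" using mA mB mB' by (intro add_mono) auto
  finally have "2 * fock_modular p (\<lambda>z. (A z - B z) / 2) \<le> 2 * 1" by simp
  then show ?thesis by (subst (asm) ennreal_mult_le_mult_iff) auto
qed


lemma part5:
  assumes p: "var_exponent p" and M: "AE w in lebesgue. p w \<le> M" and M1: "1 \<le> M"
    and Fv: "\<forall>n. F n \<in> Fvar p" and fL: "f \<in> Lvar p"
    and conv: "(\<lambda>n. Lvar_norm p (\<lambda>z. F n z - f z)) \<longlonglongrightarrow> 0"
  shows "\<exists>g\<in>Fvar p. AE z in lebesgue. g z = f z"
proof -
  have FL: "F n \<in> Lvar p" for n using Fv by (simp add: Fvar_def)
  have Fh: "F n holomorphic_on UNIV" for n using Fv by (simp add: Fvar_def)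
  have fm[measurable]: "f \<in> borel_measurable lebesgue" using fL by (rule Lvar_meas)
  have Fm[measurable]: "F n \<in> borel_measurable lebesgue" for n using FL[of n] by (rule Lvar_meas)
  have D: "(\<lambda>z. F n z - f z) \<in> Lvar p" for n by (rule Lvar_diff[OF p FL fL])
  have ev: "eventually (\<lambda>n. fock_modular p (\<lambda>z. (F n z - f z) / complex_of_real e) \<le> 1) sequentially"
    if e: "e > 0" for e
  proof -
    have "eventually (\<lambda>n. Lvar_norm p (\<lambda>z. F n z - f z) < e) sequentially"
      using order_tendstoD(2)[OF conv e] .
    then show ?thesis by (rule eventually_mono) (rule norm_lt[OF p D])
  qed
  have C: "\<exists>N. \<forall>m\<ge>N. \<forall>n\<ge>N. \<forall>z. cmod (F m z - F n z) \<le> e * Kb M z" if e: "e > 0" for e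
  proof -
    obtain N where N: "\<And>n. n \<ge> N \<Longrightarrow> fock_modular p (\<lambda>z. (F n z - f z) / complex_of_real (e/2)) \<le> 1"
      using ev[of "e/2"] e unfolding eventually_sequentially by auto
    have "cmod (F m z - F n z) \<le> e * Kb M z" if mn: "m \<ge> N" "n \<ge> N" for m n z
    proof -
      have "fock_modular p (\<lambda>z. ((F m z - f z) / complex_of_real (e/2) - (F n z - f z) / complex_of_real (e/2)) / 2) \<le> 1"
        by (rule mod_half[OF p _ _ N[OF mn(1)] N[OF mn(2)]]) measurable
      moreover have "fock_modular p (\<lambda>z. ((F m z - f z) / complex_of_real (e/2) - (F n z - f z) / complex_of_real (e/2)) / 2)
          = fock_modular p (\<lambda>z. (F m z - F n z) / complex_of_real e)"
      proof (intro mod_cong)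
        fix z
        have e0: "complex_of_real e \<noteq> 0" using e by simp
        have "((F m z - f z) / complex_of_real (e/2) - (F n z - f z) / complex_of_real (e/2)) / 2
            = (F m z - F n z) / complex_of_real e"
          using e0 by (simp add: field_simps)
        then show "cmod (((F m z - f z) / complex_of_real (e/2) - (F n z - f z) / complex_of_real (e/2)) / 2)
            = cmod ((F m z - F n z) / complex_of_real e)" by (rule arg_cong)
      qed
      ultimately have m1: "fock_modular p (\<lambda>z. (F m z - F n z) / complex_of_real e) \<le> 1" by simp
      have h: "(\<lambda>z. F m z - F n z) holomorphic_on UNIV" using Fh by (intro holomorphic_intros)
      show ?thesis by (rule ptwise_bound_scaled[OF p M M1 h e m1])
    qed
    then show ?thesis by blast
  qed
  obtain g where gh: "g holomorphic_on UNIV" and lim: "\<And>z. (\<lambda>n. F n z) \<longlonglongrightarrow> g z"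
    using lu_limit[OF M1 Fh C] by blast
  have gm[measurable]: "g \<in> borel_measurable lebesgue" by (rule holo_cont_meas[OF gh])
  have ga: "fock_modular p (\<lambda>z. (g z - f z) / complex_of_real a) \<le> 1" if a: "a > 0" for a
  proof (rule mod_fatou[OF p _ _ ev[OF a]])
    show "(\<lambda>z. (F n z - f z) / complex_of_real a) \<in> borel_measurable lebesgue" for n by measurable
    show "(\<lambda>n. (F n z - f z) / complex_of_real a) \<longlonglongrightarrow> (g z - f z) / complex_of_real a" for z
      using a by (intro tendsto_intros lim) simp
  qed
  define I where "I = fock_modular p (\<lambda>z. g z - f z)"
  have Ia: "I \<le> ennreal a" if a: "0 < a" "a \<le> 1" for a
  proof -
    have pt: "ennreal (1/a) * ennreal (cmod (g z - f z) powr p z * exp (- p z * (cmod z)\<^sup>2))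
        \<le> ennreal (cmod ((g z - f z) / complex_of_real a) powr p z * exp (- p z * (cmod z)\<^sup>2))" for z
    proof -
      define X where "X = cmod (g z - f z)"
      have q: "1 \<le> p z" by (rule ve_ge1[OF p])
      have "a powr p z \<le> a powr 1" using a q by (intro powr_mono') auto
      then have ap: "a powr p z \<le> a" using a by simp
      have apos: "0 < a powr p z" using a by simp
      have "X powr p z / a \<le> X powr p z / a powr p z"
      proof (rule divide_left_mono)
        show "0 < a * a powr p z" using a apos by simp
      qed (use ap in auto)
      also have "\<dots> = cmod ((g z - f z) / complex_of_real a) powr p z"
        using a by (simp add: X_def norm_divide powr_divide)
      finally have "X powr p z / a * exp (- p z * (cmod z)\<^sup>2) \<le> cmod ((g z - f z) / complex_of_real a) powr p z * exp (- p z * (cmod z)\<^sup>2)"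
        by (rule mult_right_mono) simp
      then have A: "ennreal ((1/a) * (X powr p z * exp (- p z * (cmod z)\<^sup>2))) \<le> ennreal (cmod ((g z - f z) / complex_of_real a) powr p z * exp (- p z * (cmod z)\<^sup>2))"
        by (intro ennreal_leI) simp
      have B: "ennreal ((1/a) * (X powr p z * exp (- p z * (cmod z)\<^sup>2))) = ennreal (1/a) * ennreal (X powr p z * exp (- p z * (cmod z)\<^sup>2))"
        by (rule ennreal_mult) (use a in auto)
      from A have "ennreal (1/a) * ennreal (X powr p z * exp (- p z * (cmod z)\<^sup>2)) \<le> ennreal (cmod ((g z - f z) / complex_of_real a) powr p z * exp (- p z * (cmod z)\<^sup>2))"
        by (simp only: B)
      then show ?thesis by (simp only: X_def)
    qed
    have "ennreal (1/a) * I = (\<integral>\<^sup>+ z. ennreal (1/a) * ennreal (cmod (g z - f z) powr p z * exp (- p z * (cmod z)\<^sup>2)) \<partial>lebesgue)"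
      unfolding I_def fock_modular_def by (rule nn_integral_cmult[symmetric]) (rule integrand_meas[OF p], measurable)
    also have "\<dots> \<le> fock_modular p (\<lambda>z. (g z - f z) / complex_of_real a)"
      unfolding fock_modular_def by (intro nn_integral_mono pt)
    also have "\<dots> \<le> 1" by (rule ga) (use a in auto)
    finally have i1: "ennreal (1/a) * I \<le> 1" .
    have "I = ennreal a * (ennreal (1/a) * I)"
      using a by (simp add: mult.assoc[symmetric] ennreal_mult[symmetric])
    also have "\<dots> \<le> ennreal a * 1" by (intro mult_left_mono i1) simp
    finally show ?thesis by simp
  qed
  have I0: "I = 0"
  proof -
    have "I \<le> 0"
    proof (rule ennreal_le_epsilon)
      fix e :: real assume e: "0 < e"
      have "I \<le> ennreal (min e 1)" using Ia[of "min e 1"] e by simp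
      also have "\<dots> \<le> ennreal e" by (intro ennreal_leI) simp
      finally show "I \<le> 0 + ennreal e" by simp
    qed
    then show ?thesis by simp
  qed
  have "AE z in lebesgue. ennreal (cmod (g z - f z) powr p z * exp (- p z * (cmod z)\<^sup>2)) = 0"
    using I0 unfolding I_def fock_modular_def
    by (subst (asm) nn_integral_0_iff_AE) (rule integrand_meas[OF p], measurable)
  then have ae: "AE z in lebesgue. g z = f z"
  proof (rule eventually_mono)
    fix z assume "ennreal (cmod (g z - f z) powr p z * exp (- p z * (cmod z)\<^sup>2)) = 0"
    then have "cmod (g z - f z) powr p z * exp (- p z * (cmod z)\<^sup>2) \<le> 0" by simp
    then have "cmod (g z - f z) powr p z \<le> 0"
      by (simp add: mult_le_0_iff)
    then have "cmod (g z - f z) powr p z = 0" using powr_ge_zero[of "cmod (g z - f z)" "p z"] by linarith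
    then show "g z = f z" by simp
  qed
  have gf: "(\<lambda>z. g z - f z) \<in> Lvar p"
  proof -
    have "fock_modular p (\<lambda>z. complex_of_real 1 * (g z - f z)) \<le> 1"
      using ga[of 1] by simp
    then show ?thesis unfolding Lvar_def by (auto intro!: exI[of _ 1] simp: top.not_eq_extremum le_less_trans)
  qed
  have "(\<lambda>z. f z + (g z - f z)) \<in> Lvar p" by (rule Lvar_add[OF p fL gf])
  then have "g \<in> Lvar p" by simp
  then have "g \<in> Fvar p" using gh by (simp add: Fvar_def)
  then show ?thesis using ae by blast
qed


lemma part6:
  assumes p: "var_exponent p" and M: "AE w in lebesgue. p w \<le> M" and M1: "1 \<le> M"
    and Fv: "\<forall>n. F n \<in> Fvar p"
    and cau: "\<forall>e>0. \<exists>N. \<forall>m\<ge>N. \<forall>n\<ge>N. Lvar_norm p (\<lambda>z. F m z - F n z) < e"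
  shows "\<exists>g\<in>Fvar p. (\<lambda>n. Lvar_norm p (\<lambda>z. F n z - g z)) \<longlonglongrightarrow> 0"
proof -
  have FL: "F n \<in> Lvar p" for n using Fv by (simp add: Fvar_def)
  have Fh: "F n holomorphic_on UNIV" for n using Fv by (simp add: Fvar_def)
  have Fm[measurable]: "F n \<in> borel_measurable lebesgue" for n using FL[of n] by (rule Lvar_meas)
  have D: "(\<lambda>z. F m z - F n z) \<in> Lvar p" for m n by (rule Lvar_diff[OF p FL FL])
  have cm: "\<exists>N. \<forall>m\<ge>N. \<forall>n\<ge>N. fock_modular p (\<lambda>z. (F m z - F n z) / complex_of_real e) \<le> 1"
    if e: "e > 0" for e
  proof -
    obtain N where N: "\<forall>m\<ge>N. \<forall>n\<ge>N. Lvar_norm p (\<lambda>z. F m z - F n z) < e" using cau e by blast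
    then show ?thesis using norm_lt[OF p D] by blast
  qed
  have C: "\<exists>N. \<forall>m\<ge>N. \<forall>n\<ge>N. \<forall>z. cmod (F m z - F n z) \<le> e * Kb M z" if e: "e > 0" for e
  proof -
    obtain N where N: "\<forall>m\<ge>N. \<forall>n\<ge>N. fock_modular p (\<lambda>z. (F m z - F n z) / complex_of_real e) \<le> 1"
      using cm[OF e] by blast
    have "cmod (F m z - F n z) \<le> e * Kb M z" if mn: "m \<ge> N" "n \<ge> N" for m n z
    proof -
      have h: "(\<lambda>z. F m z - F n z) holomorphic_on UNIV" using Fh by (intro holomorphic_intros)
      show ?thesis by (rule ptwise_bound_scaled[OF p M M1 h e]) (use N mn in blast)
    qed
    then show ?thesis by blast
  qed
  obtain g where gh: "g holomorphic_on UNIV" and lim: "\<And>z. (\<lambda>n. F n z) \<longlonglongrightarrow> g z"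
    using lu_limit[OF M1 Fh C] by blast
  have gm[measurable]: "g \<in> borel_measurable lebesgue" by (rule holo_cont_meas[OF gh])
  have tail: "\<exists>N. \<forall>n\<ge>N. fock_modular p (\<lambda>z. (F n z - g z) / complex_of_real e) \<le> 1"
    if e: "e > 0" for e
  proof -
    obtain N where N: "\<forall>m\<ge>N. \<forall>n\<ge>N. fock_modular p (\<lambda>z. (F m z - F n z) / complex_of_real e) \<le> 1"
      using cm[OF e] by blast
    have "fock_modular p (\<lambda>z. (F n z - g z) / complex_of_real e) \<le> 1" if n: "n \<ge> N" for n
    proof (rule mod_fatou[OF p])
      show "(\<lambda>z. (F n z - F m z) / complex_of_real e) \<in> borel_measurable lebesgue" for m by measurable
      show "(\<lambda>m. (F n z - F m z) / complex_of_real e) \<longlonglongrightarrow> (F n z - g z) / complex_of_real e" for z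
        using e by (intro tendsto_intros lim) simp
      show "\<forall>\<^sub>F m in sequentially. fock_modular p (\<lambda>z. (F n z - F m z) / complex_of_real e) \<le> 1"
        unfolding eventually_sequentially using N n by blast
    qed
    then show ?thesis by blast
  qed
  have conv: "(\<lambda>n. Lvar_norm p (\<lambda>z. F n z - g z)) \<longlonglongrightarrow> 0"
  proof (rule LIMSEQ_I)
    fix r :: real assume r: "0 < r"
    obtain N where N: "\<forall>n\<ge>N. fock_modular p (\<lambda>z. (F n z - g z) / complex_of_real (r/2)) \<le> 1"
      using tail[of "r/2"] r by auto
    have "norm (Lvar_norm p (\<lambda>z. F n z - g z) - 0) < r" if "n \<ge> N" for n
    proof -
      have "0 \<le> Lvar_norm p (\<lambda>z. F n z - g z) \<and> Lvar_norm p (\<lambda>z. F n z - g z) \<le> r/2"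
        by (rule norm_le) (use r N that in auto)
      then show ?thesis using r by simp
    qed
    then show "\<exists>no. \<forall>n\<ge>no. norm (Lvar_norm p (\<lambda>z. F n z - g z) - 0) < r" by blast
  qed
  obtain N where N: "\<forall>n\<ge>N. fock_modular p (\<lambda>z. (F n z - g z) / complex_of_real 1) \<le> 1"
    using tail[of 1] by auto
  have Dg: "(\<lambda>z. F N z - g z) \<in> Lvar p"
  proof -
    have "fock_modular p (\<lambda>z. complex_of_real 1 * (F N z - g z)) \<le> 1"
      using N by simp
    then show ?thesis unfolding Lvar_def by (auto intro!: exI[of _ 1] simp: top.not_eq_extremum le_less_trans)
  qed
  have "(\<lambda>z. F N z - (F N z - g z)) \<in> Lvar p" by (rule Lvar_diff[OF p FL Dg])
  then have "g \<in> Lvar p" by simp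
  then have "g \<in> Fvar p" using gh by (simp add: Fvar_def)
  then show ?thesis using conv by blast
qed

theorem mainTheorem5:
  fixes p :: "complex \<Rightarrow> real"
  assumes "bounded_var_exponent p"
  shows "Fvar p \<subseteq> Lvar p
    \<and> (\<lambda>z. 0) \<in> Fvar p
    \<and> (\<forall>f\<in>Fvar p. \<forall>g\<in>Fvar p. (\<lambda>z. f z + g z) \<in> Fvar p)
    \<and> (\<forall>c f. f \<in> Fvar p \<longrightarrow> (\<lambda>z. c * f z) \<in> Fvar p)
    \<and> (\<forall>F f. (\<forall>n. F n \<in> Fvar p) \<longrightarrow> f \<in> Lvar p \<longrightarrow>
           (\<lambda>n. Lvar_norm p (\<lambda>z. F n z - f z)) \<longlonglongrightarrow> 0 \<longrightarrow>
           (\<exists>g\<in>Fvar p. AE z in lebesgue. g z = f z))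
    \<and> (\<forall>F. (\<forall>n. F n \<in> Fvar p) \<longrightarrow>
           (\<forall>e>0. \<exists>N. \<forall>m\<ge>N. \<forall>n\<ge>N. Lvar_norm p (\<lambda>z. F m z - F n z) < e) \<longrightarrow>
           (\<exists>g\<in>Fvar p. (\<lambda>n. Lvar_norm p (\<lambda>z. F n z - g z)) \<longlonglongrightarrow> 0))"
proof -
  have p: "var_exponent p" using assms by (simp add: bounded_var_exponent_def)
  obtain M0 where M0: "AE z in lebesgue. p z \<le> M0" using assms by (auto simp: bounded_var_exponent_def)
  define M where "M = max M0 1"
  have M: "AE z in lebesgue. p z \<le> M" using M0 by (rule eventually_mono) (simp add: M_def)
  have M1: "1 \<le> M" by (simp add: M_def)
  have s1: "Fvar p \<subseteq> Lvar p" by (auto simp: Fvar_def)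
  have s2: "(\<lambda>z. 0) \<in> Fvar p"
    by (auto simp: Fvar_def Lvar_def mod_zero intro!: exI[of _ 1])
  have s3: "\<forall>f\<in>Fvar p. \<forall>g\<in>Fvar p. (\<lambda>z. f z + g z) \<in> Fvar p"
    by (auto simp: Fvar_def intro!: Lvar_add[OF p] holomorphic_intros)
  have s4: "\<forall>c f. f \<in> Fvar p \<longrightarrow> (\<lambda>z. c * f z) \<in> Fvar p"
    by (auto simp: Fvar_def intro!: Lvar_cmult[OF p] holomorphic_intros)
  have s5: "\<forall>F f. (\<forall>n. F n \<in> Fvar p) \<longrightarrow> f \<in> Lvar p \<longrightarrow>
           (\<lambda>n. Lvar_norm p (\<lambda>z. F n z - f z)) \<longlonglongrightarrow> 0 \<longrightarrow>
           (\<exists>g\<in>Fvar p. AE z in lebesgue. g z = f z)"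
    using part5[OF p M M1] by blast
  have s6: "\<forall>F. (\<forall>n. F n \<in> Fvar p) \<longrightarrow>
           (\<forall>e>0. \<exists>N. \<forall>m\<ge>N. \<forall>n\<ge>N. Lvar_norm p (\<lambda>z. F m z - F n z) < e) \<longrightarrow>
           (\<exists>g\<in>Fvar p. (\<lambda>n. Lvar_norm p (\<lambda>z. F n z - g z)) \<longlonglongrightarrow> 0)"
    using part6[OF p M M1] by blast
  show ?thesis using s1 s2 s3 s4 s5 s6 by blast
qed


end
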